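(* Let $1<p<\infty$, $1/p+1/p'=1$, and let $f=\sum_{k\ge0}c_kh_{2^k}\in L^p$ be a first-order Haar chaos with $c_0\ne0$. Let $\{d_k\}$ be the Taylor coefficients of $\hat g(z)=1/\hat f(z)$ (as a formal power series), and define $g^n$ as follows: for $n\ge1$, with $m=\lfloor\log_2n\rfloor$ and $\nu(n)$ the largest integer with $2^{\nu(n)}\mid n$, $g^n=\sum_{j=0}^{\nu(n)}d_j2^{m-j}h_{n/2^j}$. Then $\hat g\in A_{p'}^+(\mathbb D_{2^{-1/p}})$ if and only if $\sup_{n\ge1}\|f_n\|_{L^p}\|g^n\|_{L^{p'}}<\infty$.
   Context: All functions are complex-valued on $I=(0,1]$. Let $h=\chi_{(0,1/2]}-\chi_{(1/2,1]}$; for $n=2^k+j$ with $k\ge0$, $0\le j\le2^k-1$, $h_n(t)=h(2^kt-j)$ on $(j2^{-k},(j+1)2^{-k}]$ and $0$ otherwise. For mean-zero $f$, the system of dilations and translations is $f_n(t)=f(2^kt-j)$ on $(j2^{-k},(j+1)2^{-k}]$, $0$ otherwise. A first-order Haar chaos is $f=\sum_{k\ge0}c_kh_{2^k}$, $c_k\in\mathbb C$; its symbol is $\hat f(z)=\sum_kc_kz^k$. $A_q^+(\mathbb D_R)$ is the space of power series $u(z)=\sum a_kz^k$ with $\|(a_kR^k)_k\|_{\ell^q}<\infty$. (The system $\{g^n\}$ is biorthogonal to $\{f_n\}$.) *)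

theory Defs
  imports "HOL-Analysis.Analysis" "HOL-Computational_Algebra.Formal_Power_Series"
begin

text \<open>Dyadic indexing: for n = 2^k + j with 0 \<le> j < 2^k, level n = k and pos n = j.\<close>
definition level :: "nat \<Rightarrow> nat" where
  "level n = (GREATEST k::nat. 2 ^ k \<le> n)"

definition pos :: "nat \<Rightarrow> nat" where
  "pos n = n - 2 ^ level n"

definition nu :: "nat \<Rightarrow> nat" where
  "nu n = (GREATEST k::nat. 2 ^ k dvd n)"

definition dil :: "(real \<Rightarrow> complex) \<Rightarrow> nat \<Rightarrow> real \<Rightarrow> complex" where
  "dil u n t = (if real (pos n) / 2 ^ level n < t \<and> t \<le> (real (pos n) + 1) / 2 ^ level n
                then u (2 ^ level n * t - real (pos n)) else 0)"

definition haar :: "real \<Rightarrow> complex" where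
  "haar t = (if 0 < t \<and> t \<le> 1/2 then 1 else if 1/2 < t \<and> t \<le> 1 then -1 else 0)"

definition haar_fn :: "nat \<Rightarrow> real \<Rightarrow> complex" where
  "haar_fn n = dil haar n"

text \<open>First-order Haar chaos f = sum_k c_k h_{2^k}; for each t > 0 only finitely many terms are nonzero.\<close>
definition chaos :: "(nat \<Rightarrow> complex) \<Rightarrow> real \<Rightarrow> complex" where
  "chaos c t = (\<Sum>k. c k * haar_fn (2 ^ k) t)"

definition symbol :: "(nat \<Rightarrow> complex) \<Rightarrow> complex fps" where
  "symbol c = Abs_fps c"

definition inv_coeffs :: "(nat \<Rightarrow> complex) \<Rightarrow> nat \<Rightarrow> complex" where
  "inv_coeffs c k = fps_nth (inverse (symbol c)) k"

definition gdual :: "(nat \<Rightarrow> complex) \<Rightarrow> nat \<Rightarrow> real \<Rightarrow> complex" where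
  "gdual c n t = (\<Sum>j=0..nu n. inv_coeffs c j * 2 ^ (level n - j) * haar_fn (n div 2 ^ j) t)"

definition Lpnorm :: "real \<Rightarrow> (real \<Rightarrow> complex) \<Rightarrow> real" where
  "Lpnorm p u = (set_lebesgue_integral lborel {0<..1::real} (\<lambda>t. norm (u t) powr p)) powr (1 / p)"

text \<open>Membership of a power series sum a_k z^k in A_q^+(D_R).\<close>
definition A_plus :: "real \<Rightarrow> real \<Rightarrow> (nat \<Rightarrow> complex) \<Rightarrow> bool" where
  "A_plus q R a \<longleftrightarrow> summable (\<lambda>k. norm (a k * of_real (R ^ k)) powr q)"

end

theory Submission
  imports Defs
begin

lemma conv_pow:
  fixes lam y :: "'a \<Rightarrow> real"
  assumes S: "finite S" and lam: "\<And>i. i\<in>S \<Longrightarrow> lam i \<ge> 0"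
    and y: "\<And>i. i\<in>S \<Longrightarrow> y i \<ge> 0" and q: "q \<ge> 1"
  shows "(\<Sum>i\<in>S. lam i * y i) powr q \<le> (\<Sum>i\<in>S. lam i) powr (q-1) * (\<Sum>i\<in>S. lam i * y i powr q)"
proof -
  define S' where "S' = {i\<in>S. lam i > 0 \<and> y i > 0}"
  have S'S: "S' \<subseteq> S" and fS': "finite S'" using S by (auto simp: S'_def)
  have eq1: "(\<Sum>i\<in>S. lam i * y i) = (\<Sum>i\<in>S'. lam i * y i)"
  proof (rule sum.mono_neutral_right[OF S S'S])
    show "\<forall>i\<in>S - S'. lam i * y i = 0" using lam y by (force simp: S'_def)
  qed
  have R0: "0 \<le> (\<Sum>i\<in>S. lam i) powr (q-1) * (\<Sum>i\<in>S. lam i * y i powr q)"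
    using lam by (intro mult_nonneg_nonneg sum_nonneg) auto
  show ?thesis
  proof (cases "S' = {}")
    case True
    then show ?thesis using eq1 R0 by simp
  next
    case False
    define L where "L = (\<Sum>i\<in>S'. lam i)"
    have Lpos: "L > 0" unfolding L_def using False fS' by (intro sum_pos) (auto simp: S'_def)
    have "(\<lambda>x. x powr q) (\<Sum>i\<in>S'. (lam i / L) *\<^sub>R y i) \<le> (\<Sum>i\<in>S'. (lam i / L) * (\<lambda>x. x powr q) (y i))"
      apply (rule convex_on_sum[OF fS' False powr_convex[OF q]])
      using Lpos by (auto simp: S'_def L_def sum_divide_distrib[symmetric])
    hence "((\<Sum>i\<in>S'. lam i * y i) / L) powr q \<le> (\<Sum>i\<in>S'. lam i * y i powr q) / L"
      by (simp add: sum_divide_distrib[symmetric])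
    hence "(\<Sum>i\<in>S'. lam i * y i) powr q / L powr q \<le> (\<Sum>i\<in>S'. lam i * y i powr q) / L"
      using Lpos by (simp add: powr_divide sum_nonneg S'_def less_imp_le)
    hence A: "(\<Sum>i\<in>S'. lam i * y i) powr q \<le> L powr (q-1) * (\<Sum>i\<in>S'. lam i * y i powr q)"
      using Lpos by (simp add: divide_simps powr_diff mult.commute)
    have B1: "L \<le> (\<Sum>i\<in>S. lam i)" unfolding L_def
      by (rule sum_mono2[OF S S'S]) (use lam in auto)
    have B2: "(\<Sum>i\<in>S'. lam i * y i powr q) \<le> (\<Sum>i\<in>S. lam i * y i powr q)"
      by (rule sum_mono2[OF S S'S]) (use lam in auto)
    have "L powr (q-1) * (\<Sum>i\<in>S'. lam i * y i powr q) \<le> (\<Sum>i\<in>S. lam i) powr (q-1) * (\<Sum>i\<in>S. lam i * y i powr q)"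
      apply (rule mult_mono)
      using B1 B2 Lpos q by (auto intro!: powr_mono2 sum_nonneg simp: S'_def)
    then show ?thesis using A eq1 by simp
  qed
qed

lemma schur:
  fixes K :: "'a \<Rightarrow> 'a \<Rightarrow> real"
  assumes A: "finite A" and q: "q \<ge> 1" and S: "S \<ge> 0" and K: "\<And>k i. K k i \<ge> 0"
    and x: "\<And>i. x i \<ge> 0"
    and row: "\<And>k. k\<in>A \<Longrightarrow> (\<Sum>i\<in>A. K k i) \<le> S"
    and col: "\<And>i. i\<in>A \<Longrightarrow> (\<Sum>k\<in>A. K k i) \<le> S"
  shows "(\<Sum>k\<in>A. (\<Sum>i\<in>A. K k i * x i) powr q) \<le> S powr q * (\<Sum>i\<in>A. x i powr q)"
proof -
  have "(\<Sum>k\<in>A. (\<Sum>i\<in>A. K k i * x i) powr q) \<le> (\<Sum>k\<in>A. S powr (q-1) * (\<Sum>i\<in>A. K k i * x i powr q))"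
  proof (rule sum_mono)
    fix k assume k: "k \<in> A"
    have "(\<Sum>i\<in>A. K k i * x i) powr q \<le> (\<Sum>i\<in>A. K k i) powr (q-1) * (\<Sum>i\<in>A. K k i * x i powr q)"
      by (rule conv_pow[OF A K x q])
    also have "\<dots> \<le> S powr (q-1) * (\<Sum>i\<in>A. K k i * x i powr q)"
      apply (rule mult_right_mono)
      using row[OF k] q K by (auto intro!: powr_mono2 sum_nonneg)
    finally show "(\<Sum>i\<in>A. K k i * x i) powr q \<le> S powr (q-1) * (\<Sum>i\<in>A. K k i * x i powr q)" .
  qed
  also have "\<dots> = S powr (q-1) * (\<Sum>i\<in>A. x i powr q * (\<Sum>k\<in>A. K k i))"
  proof -
    have "(\<Sum>k\<in>A. \<Sum>i\<in>A. K k i * x i powr q) = (\<Sum>i\<in>A. \<Sum>k\<in>A. K k i * x i powr q)"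
      by (rule sum.swap)
    also have "\<dots> = (\<Sum>i\<in>A. x i powr q * (\<Sum>k\<in>A. K k i))"
      by (simp add: sum_distrib_left mult.commute)
    finally show ?thesis by (simp add: sum_distrib_left[symmetric])
  qed
  also have "\<dots> \<le> S powr (q-1) * (\<Sum>i\<in>A. x i powr q * S)"
    by (intro mult_left_mono sum_mono mult_left_mono) (auto simp: col)
  also have "\<dots> = S powr q * (\<Sum>i\<in>A. x i powr q)"
  proof (cases "S = 0")
    case True then show ?thesis by simp
  next
    case False
    then have "S powr (q-1) * S = S powr q" using S by (simp add: powr_diff)
    then show ?thesis by (simp add: sum_distrib_left[symmetric] mult_ac)
  qed
  finally show ?thesis .
qed

lemma geo_inj:
  fixes r :: real
  assumes "finite A" "inj_on g A" "0 \<le> r" "r < 1"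
  shows "(\<Sum>i\<in>A. r ^ g i) \<le> 1 / (1 - r)"
proof -
  have "(\<Sum>i\<in>A. r ^ g i) = (\<Sum>l\<in>g ` A. r ^ l)" using assms by (simp add: sum.reindex)
  also have "\<dots> \<le> (\<Sum>l. r ^ l)"
    using assms by (intro sum_le_suminf summable_geometric) auto
  also have "\<dots> = 1 / (1 - r)" using assms by (simp add: suminf_geometric)
  finally show ?thesis .
qed

lemma kern_fwd_row: "0 \<le> r \<Longrightarrow> r < (1::real) \<Longrightarrow> (\<Sum>i\<in>{..N}. if i \<le> k then r ^ (k - i) else 0) \<le> 1 / (1 - r)"
  apply (subst sum.inter_filter[symmetric], simp)
  apply (rule geo_inj) by (auto simp: inj_on_def)

lemma kern_fwd_col: "0 \<le> r \<Longrightarrow> r < (1::real) \<Longrightarrow> (\<Sum>k\<in>{..N}. if i \<le> k then r ^ (k - i) else 0) \<le> 1 / (1 - r)"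
  apply (subst sum.inter_filter[symmetric], simp)
  apply (rule geo_inj) by (auto simp: inj_on_def)

lemma kern_bwd_row: "0 \<le> r \<Longrightarrow> r < (1::real) \<Longrightarrow> (\<Sum>i\<in>{..N}. if k \<le> i then r ^ (i - k) else 0) \<le> 1 / (1 - r)"
  apply (subst sum.inter_filter[symmetric], simp)
  apply (rule geo_inj) by (auto simp: inj_on_def)

lemma kern_bwd_col: "0 \<le> r \<Longrightarrow> r < (1::real) \<Longrightarrow> (\<Sum>k\<in>{..N}. if k \<le> i then r ^ (i - k) else 0) \<le> 1 / (1 - r)"
  apply (subst sum.inter_filter[symmetric], simp)
  apply (rule geo_inj) by (auto simp: inj_on_def)

lemma pow_powr: "x > 0 \<Longrightarrow> (x ^ k) powr q = (x powr q) ^ k" for x :: real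
  by (simp add: powr_realpow[symmetric] powr_powr mult.commute)

lemma sum_sq_bound: "0 \<le> a \<Longrightarrow> 0 \<le> b \<Longrightarrow> 0 \<le> q \<Longrightarrow> (a + b) powr q \<le> 2 powr q * (a powr q + b powr q)" for a b q :: real
proof -
  assume a: "0 \<le> a" and b: "0 \<le> b" and q: "0 \<le> q"
  have "(a + b) powr q \<le> (2 * max a b) powr q" using a b q by (intro powr_mono2) auto
  also have "\<dots> = 2 powr q * max a b powr q" using a b by (simp add: powr_mult)
  also have "\<dots> \<le> 2 powr q * (a powr q + b powr q)"
    by (intro mult_left_mono) (auto simp: max_def)
  finally show ?thesis .
qed

definition aa :: "(nat \<Rightarrow> complex) \<Rightarrow> nat \<Rightarrow> complex" where "aa d k = d k / 2 ^ k"
definition TT :: "(nat \<Rightarrow> complex) \<Rightarrow> nat \<Rightarrow> nat \<Rightarrow> complex" where "TT d N k = (\<Sum>j\<in>{k..N}. aa d j)"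
definition Psi :: "real \<Rightarrow> (nat \<Rightarrow> complex) \<Rightarrow> nat \<Rightarrow> real" where
  "Psi q d N = (1/2) * norm (TT d N 0) powr q + (\<Sum>k\<le>N. 2 ^ k / 2 * norm (TT d N (Suc k) - aa d k) powr q)"

lemma TT_split: "k \<le> N \<Longrightarrow> TT d N k = aa d k + TT d N (Suc k)"
  unfolding TT_def by (subst sum.atLeast_Suc_atMost) auto

lemma Psi_ge: "(1/2) * norm (TT d N 0) powr q \<le> Psi q d N"
   "(\<Sum>k\<le>N. 2 ^ k / 2 * norm (TT d N (Suc k) - aa d k) powr q) \<le> Psi q d N"
  unfolding Psi_def by (auto intro!: sum_nonneg)

lemma discrete:
  fixes d :: "nat \<Rightarrow> complex" and q P :: real
  assumes q: "q > 1" and P: "1/P + 1/q = 1"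
  shows "summable (\<lambda>k. norm (d k * of_real ((2 powr (-1/P))^k)) powr q) \<longleftrightarrow> (\<exists>C. \<forall>N. Psi q d N \<le> C)"
proof -
  define R where "R = 2 powr (-1/P)"
  define \<rho> where "\<rho> = 2 powr (-1/q)"
  have iP: "1/P = 1 - 1/q" using P by simp
  have iq: "0 < 1/q" "1/q < 1" using q by auto
  have eP: "-1/P < 0" using iP iq by (simp add: minus_divide_left)
  have R0: "R > 0" and R1: "R < 1" unfolding R_def using eP by (auto intro: powr_less_one)
  have r0: "\<rho> > 0" and r1: "\<rho> < 1" unfolding \<rho>_def using iq by (auto intro: powr_less_one)
  have Rr: "R * \<rho> = 1/2"
  proof -
    have e: "-1/P + -1/q = -1" using P by (simp add: minus_divide_left[symmetric] algebra_simps)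
    have "R * \<rho> = 2 powr (-1/P + -1/q)" unfolding R_def \<rho>_def by (rule powr_add[symmetric])
    also have "\<dots> = 1/2" unfolding e by (simp add: powr_minus_divide)
    finally show ?thesis .
  qed
  have Rd: "R = 1 / (2 * \<rho>)" using Rr r0 by (simp add: field_simps)
  have rq: "\<rho> powr q = 1/2"
  proof -
    have "\<rho> powr q = 2 powr (-1/q * q)" unfolding \<rho>_def by (rule powr_powr)
    also have "-1/q * q = -1" using q by simp
    finally show ?thesis by (simp add: powr_minus_divide)
  qed
  define z where "z k = norm (d k) * R ^ k" for k
  have zdef: "norm (d k * of_real (R^k)) = z k" for k
    using R0 by (simp add: z_def norm_mult norm_power)
  have z0: "z k \<ge> 0" for k using R0 by (simp add: z_def)
  have bz: "norm (aa d k) = z k * \<rho> ^ k" for k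
  proof -
    have "R ^ k * \<rho> ^ k = (1/2) ^ k" by (simp add: power_mult_distrib[symmetric] Rr)
    then show ?thesis by (simp add: aa_def z_def norm_divide norm_power power_divide mult.assoc)
  qed
  have rqk: "(\<rho> ^ k) powr q = (1/2) ^ k" for k using r0 by (simp add: pow_powr rq)
  define S where "S = 1 / (1 - \<rho>)"
  define S' where "S' = 1 / (1 - R)"
  have q1: "q \<ge> 1" using q by simp
  show ?thesis unfolding zdef R_def[symmetric]
  proof
    assume sm: "summable (\<lambda>k. z k powr q)"
    define B where "B = S powr q * (\<Sum>k. z k powr q)"
    have "Psi q d N \<le> B" for N
    proof -
      define Y where "Y k = (\<Sum>j\<in>{k..N}. norm (aa d j))" for k
      define K where "K k j = (if k \<le> j then \<rho> ^ (j - k) else 0)" for k j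
      have Y0: "Y k \<ge> 0" for k by (simp add: Y_def sum_nonneg)
      have h1: "norm (TT d N (Suc k) - aa d k) \<le> Y k" if "k \<le> N" for k
      proof -
        have "norm (TT d N (Suc k) - aa d k) \<le> norm (TT d N (Suc k)) + norm (aa d k)" by (rule norm_triangle_ineq4)
        also have "\<dots> \<le> (\<Sum>j\<in>{Suc k..N}. norm (aa d j)) + norm (aa d k)"
          unfolding TT_def by (simp add: norm_sum)
        also have "\<dots> = Y k" unfolding Y_def using that by (subst sum.atLeast_Suc_atMost) auto
        finally show ?thesis .
      qed
      have h0: "norm (TT d N 0) \<le> Y 0" unfolding TT_def Y_def by (rule norm_sum)
      have hY: "2 ^ k * Y k powr q = (\<Sum>j\<le>N. K k j * z j) powr q" if "k \<le> N" for k
      proof -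
        have "Y k = (\<Sum>j\<in>{k..N}. \<rho> ^ k * (\<rho> ^ (j - k) * z j))"
          unfolding Y_def by (rule sum.cong) (auto simp: bz power_add[symmetric] mult_ac)
        also have "\<dots> = \<rho> ^ k * (\<Sum>j\<le>N. K k j * z j)"
        proof -
          have e: "{j. j \<le> N \<and> k \<le> j} = {k..N}" by auto
          have "(\<Sum>j\<le>N. K k j * z j) = (\<Sum>j\<le>N. if k \<le> j then \<rho>^(j-k) * z j else 0)"
            unfolding K_def by (rule sum.cong) auto
          also have "\<dots> = (\<Sum>j\<in>{k..N}. \<rho>^(j-k)*z j)"
            by (subst sum.inter_filter[symmetric]) (simp_all add: e)
          finally show ?thesis by (simp add: sum_distrib_left)
        qed
        finally have "Y k powr q = (\<rho> ^ k) powr q * (\<Sum>j\<le>N. K k j * z j) powr q"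
          using r0 z0 by (simp add: powr_mult K_def sum_nonneg)
        then show ?thesis by (simp add: rqk power_divide)
      qed
      have "Psi q d N \<le> (1/2) * Y 0 powr q + (\<Sum>k\<le>N. 2 ^ k / 2 * Y k powr q)"
        unfolding Psi_def
        apply (intro add_mono mult_left_mono sum_mono powr_mono2)
        using h0 h1 q by auto
      also have "\<dots> \<le> (\<Sum>k\<le>N. 2 ^ k * Y k powr q)"
      proof -
        have "(1/2) * Y 0 powr q \<le> (\<Sum>k\<le>N. 2 ^ k / 2 * Y k powr q)"
          using member_le_sum[of 0 "{..N}" "\<lambda>k. 2 ^ k / 2 * Y k powr q"] by auto
        then have "(1/2) * Y 0 powr q + (\<Sum>k\<le>N. 2 ^ k / 2 * Y k powr q) \<le> 2 * (\<Sum>k\<le>N. 2 ^ k / 2 * Y k powr q)" by simp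
        also have "\<dots> = (\<Sum>k\<le>N. 2 ^ k * Y k powr q)" by (simp add: sum_distrib_left)
        finally show ?thesis .
      qed
      also have "\<dots> = (\<Sum>k\<le>N. (\<Sum>j\<le>N. K k j * z j) powr q)" by (rule sum.cong) (auto simp: hY)
      also have "\<dots> \<le> S powr q * (\<Sum>j\<le>N. z j powr q)"
        apply (rule schur)
        using q r0 r1 z0 kern_bwd_row[of \<rho>] kern_bwd_col[of \<rho>]
        by (auto simp: K_def S_def)
      also have "\<dots> \<le> B" unfolding B_def
        by (intro mult_left_mono sum_le_suminf sm) auto
      finally show ?thesis .
    qed
    then show "\<exists>C. \<forall>N. Psi q d N \<le> C" by blast
  next
    assume "\<exists>C. \<forall>N. Psi q d N \<le> C"
    then obtain C where C: "\<And>N. Psi q d N \<le> C" by blast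
    define B where "B = 2 powr q * S' powr q * (2 powr q * (4 * C))"
    have main: "(\<Sum>k\<le>N. z k powr q) \<le> B" for N
    proof -
      define T where "T k = TT d N k" for k
      define v where "v k = norm (T (Suc k) - aa d k)" for k
      define \<tau> where "\<tau> = norm (T 0)"
      define w where "w i = v i / \<rho> ^ i" for i
      define x where "x i = w i + (if i = 0 then \<tau> else 0)" for i
      define K where "K k i = (if i \<le> k then R ^ (k - i) else 0)" for k i
      have v0: "v k \<ge> 0" for k by (simp add: v_def)
      have w0: "w k \<ge> 0" for k using r0 by (simp add: w_def v0)
      have t0: "\<tau> \<ge> 0" by (simp add: \<tau>_def)
      have x0: "x k \<ge> 0" for k using w0 t0 by (simp add: x_def)
      have rec: "norm (T (Suc k)) \<le> (norm (T k) + v k) / 2" if "k \<le> N" for k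
      proof -
        have "2 * T (Suc k) = T k + (T (Suc k) - aa d k)"
          using TT_split[OF that, of d] by (simp add: T_def)
        then have "2 * norm (T (Suc k)) = norm (T k + (T (Suc k) - aa d k))"
          by (metis norm_mult norm_numeral)
        also have "\<dots> \<le> norm (T k) + v k" unfolding v_def by (rule norm_triangle_ineq)
        finally show ?thesis by simp
      qed
      have ind: "norm (T k) / \<rho> ^ k \<le> R ^ k * \<tau> + (\<Sum>i<k. R ^ (k - i) * w i)" if "k \<le> Suc N" for k
        using that
      proof (induction k)
        case 0 then show ?case by (simp add: \<tau>_def)
      next
        case (Suc k)
        then have kN: "k \<le> N" by simp
        have "norm (T (Suc k)) / \<rho> ^ Suc k \<le> (norm (T k) + v k) / 2 / \<rho> ^ Suc k"
          by (rule divide_right_mono[OF rec[OF kN]]) (use r0 in simp)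
        also have "\<dots> = R * (norm (T k) / \<rho> ^ k + w k)"
          using r0 by (simp add: w_def Rd field_simps)
        also have "\<dots> \<le> R * (R ^ k * \<tau> + (\<Sum>i<k. R ^ (k - i) * w i) + w k)"
          using Suc R0 kN by (intro mult_left_mono) auto
        also have "\<dots> = R ^ Suc k * \<tau> + (\<Sum>i<Suc k. R ^ (Suc k - i) * w i)"
          by (simp add: algebra_simps sum_distrib_left Suc_diff_le)
        finally show ?case .
      qed
      have zk: "z k \<le> 2 * (\<Sum>i\<le>N. K k i * x i)" if kN: "k \<le> N" for k
      proof -
        have "z k = norm (aa d k) / \<rho> ^ k" using r0 by (simp add: bz)
        also have "\<dots> \<le> (norm (T (Suc k)) + v k) / \<rho> ^ k"
        proof -
          have "norm (aa d k) \<le> norm (T (Suc k)) + v k"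
            unfolding v_def by (metis norm_minus_commute norm_triangle_ineq4 diff_diff_eq2 diff_self diff_zero norm_diff_triangle_ineq add.commute norm_triangle_sub)
          then show ?thesis using r0 by (simp add: divide_right_mono)
        qed
        also have "\<dots> = \<rho> * (norm (T (Suc k)) / \<rho> ^ Suc k) + w k"
          using r0 by (simp add: w_def field_simps)
        also have "\<dots> \<le> 1 * (R ^ Suc k * \<tau> + (\<Sum>i<Suc k. R ^ (Suc k - i) * w i)) + w k"
        proof -
          have "norm (T (Suc k)) / \<rho> ^ Suc k \<le> R ^ Suc k * \<tau> + (\<Sum>i<Suc k. R ^ (Suc k - i) * w i)"
            using ind[of "Suc k"] kN by simp
          then show ?thesis using r0 r1
            by (intro add_right_mono mult_mono) (auto simp: divide_nonneg_nonneg)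
        qed
        also have "\<dots> \<le> R ^ k * \<tau> + (\<Sum>i<Suc k. R ^ (k - i) * w i) + w k"
        proof -
          have "R ^ Suc k \<le> R ^ k" using R0 R1 by (simp add: power_decreasing_iff)
          then have A: "R ^ Suc k * \<tau> \<le> R ^ k * \<tau>" using t0 by (rule mult_right_mono)
          have pw: "R ^ (Suc k - i) \<le> R ^ (k - i)" if "i < Suc k" for i
            using R0 R1 that by (intro power_decreasing) auto
          have B: "(\<Sum>i<Suc k. R ^ (Suc k - i) * w i) \<le> (\<Sum>i<Suc k. R ^ (k - i) * w i)"
          proof (rule sum_mono)
            fix i assume "i \<in> {..<Suc k}"
            then show "R ^ (Suc k - i) * w i \<le> R ^ (k - i) * w i"
              using pw[of i] w0[of i] by (intro mult_right_mono) auto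
          qed
          from add_mono[OF A B] show ?thesis by simp
        qed
        also have "\<dots> \<le> 2 * (R ^ k * \<tau> + (\<Sum>i<Suc k. R ^ (k - i) * w i))"
        proof -
          have "w k \<le> (\<Sum>i<Suc k. R ^ (k - i) * w i)"
            using member_le_sum[of k "{..<Suc k}" "\<lambda>i. R ^ (k - i) * w i"] R0 w0 by auto
          then show ?thesis using R0 t0 by simp
        qed
        also have "R ^ k * \<tau> + (\<Sum>i<Suc k. R ^ (k - i) * w i) = (\<Sum>i\<le>N. K k i * x i)"
        proof -
          have "(\<Sum>i\<le>N. K k i * x i) = (\<Sum>i\<le>N. K k i * w i) + (\<Sum>i\<le>N. K k i * (if i = 0 then \<tau> else 0))"
            by (simp add: x_def sum.distrib distrib_left)
          also have "(\<Sum>i\<le>N. K k i * (if i = 0 then \<tau> else 0)) = R ^ k * \<tau>"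
          proof -
            have "(\<Sum>i\<le>N. K k i * (if i = 0 then \<tau> else 0)) = (\<Sum>i\<le>N. if i = 0 then R ^ k * \<tau> else 0)"
              by (rule sum.cong) (auto simp: K_def)
            then show ?thesis by simp
          qed
          also have "(\<Sum>i\<le>N. K k i * w i) = (\<Sum>i<Suc k. R ^ (k - i) * w i)"
          proof -
            have "(\<Sum>i\<le>N. K k i * w i) = (\<Sum>i\<in>{i\<in>{..N}. i \<le> k}. R ^ (k - i) * w i)"
              unfolding K_def by (subst sum.inter_filter) (auto intro!: sum.cong)
            also have "{i\<in>{..N}. i \<le> k} = {..<Suc k}" using kN by auto
            finally show ?thesis .
          qed
          finally show ?thesis by simp
        qed
        finally show ?thesis .
      qed
      have "(\<Sum>k\<le>N. z k powr q) \<le> (\<Sum>k\<le>N. (2 * (\<Sum>i\<le>N. K k i * x i)) powr q)"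
        using zk z0 q by (intro sum_mono powr_mono2) auto
      also have "\<dots> = 2 powr q * (\<Sum>k\<le>N. (\<Sum>i\<le>N. K k i * x i) powr q)"
      proof -
        have nn: "0 \<le> (\<Sum>i\<le>N. K k i * x i)" for k
          using R0 x0 by (auto intro!: sum_nonneg mult_nonneg_nonneg simp: K_def)
        have "(2 * (\<Sum>i\<le>N. K k i * x i)) powr q = 2 powr q * (\<Sum>i\<le>N. K k i * x i) powr q" for k
          using nn[of k] by (simp add: powr_mult)
        then show ?thesis by (simp add: sum_distrib_left)
      qed
      also have "\<dots> \<le> 2 powr q * (S' powr q * (\<Sum>i\<le>N. x i powr q))"
        apply (intro mult_left_mono schur)
        using q R0 R1 x0 kern_fwd_row[of R] kern_fwd_col[of R]
        by (auto simp: K_def S'_def)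
      also have "(\<Sum>i\<le>N. x i powr q) \<le> 2 powr q * (4 * C)"
      proof -
        have "(\<Sum>i\<le>N. x i powr q) \<le> (\<Sum>i\<le>N. 2 powr q * (w i powr q + (if i = 0 then \<tau> powr q else 0)))"
          unfolding x_def using w0 t0 q
          by (intro sum_mono order.trans[OF sum_sq_bound]) auto
        also have "\<dots> = 2 powr q * ((\<Sum>i\<le>N. w i powr q) + \<tau> powr q)"
          by (simp add: sum_distrib_left[symmetric] sum.distrib)
        also have "(\<Sum>i\<le>N. w i powr q) = 2 * (\<Sum>k\<le>N. 2 ^ k / 2 * norm (TT d N (Suc k) - aa d k) powr q)"
          unfolding sum_distrib_left
        proof (rule sum.cong)
          fix i
          have "w i powr q = v i powr q / (\<rho> ^ i) powr q" using r0 v0 by (simp add: w_def powr_divide)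
          also have "\<dots> = 2 ^ i * v i powr q" by (simp add: rqk power_one_over)
          finally show "w i powr q = 2 * (2 ^ i / 2 * norm (TT d N (Suc i) - aa d i) powr q)"
            by (simp add: v_def T_def)
        qed simp
        also have "\<dots> \<le> 2 * C" using Psi_ge(2)[where N=N and q=q and d=d] C[of N] by simp
        also have "\<tau> powr q \<le> 2 * C" using Psi_ge(1)[where N=N and q=q and d=d] C[of N] by (simp add: \<tau>_def T_def)
        finally show ?thesis by simp
      qed
      finally show ?thesis unfolding B_def using R0 R1 by (simp add: S'_def mult_left_mono)
    qed
    show "summable (\<lambda>k. z k powr q)"
    proof (rule summableI_nonneg_bounded)
      fix n
      have "(\<Sum>i<n. z i powr q) \<le> (\<Sum>i\<le>n. z i powr q)" by (intro sum_mono2) auto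
      then show "(\<Sum>i<n. z i powr q) \<le> B" using main[of n] by simp
    qed simp
  qed
qed

lemma level_char:
  assumes "2 ^ k \<le> n" "n < 2 ^ Suc k"
  shows "level n = k"
  unfolding level_def
proof (rule Greatest_equality)
  show "2 ^ k \<le> n" by fact
  fix y assume "2 ^ y \<le> (n::nat)"
  then have "2 ^ y < (2::nat) ^ Suc k" using assms by linarith
  then have "y < Suc k" by (rule power_less_imp_less_exp[rotated]) simp
  then show "y \<le> k" by simp
qed

lemma bd2: "2 ^ y \<le> (n::nat) \<Longrightarrow> y \<le> n"
  using less_exp[of y] by linarith
lemma level_bounds:
  assumes "n \<ge> 1"
  shows "2 ^ level n \<le> n" "n < 2 ^ Suc (level n)"
proof -
  have ex: "(2::nat) ^ 0 \<le> n" using assms by simp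
  show A: "2 ^ level n \<le> n" unfolding level_def
    by (rule GreatestI_nat[where P="\<lambda>k. 2^k \<le> n" and k=0 and b=n, OF ex bd2])
  show "n < 2 ^ Suc (level n)"
  proof (rule ccontr)
    assume "\<not> n < 2 ^ Suc (level n)"
    then have h: "2 ^ Suc (level n) \<le> n" by simp
    have "Suc (level n) \<le> level n" unfolding level_def
      by (rule Greatest_le_nat[where P="\<lambda>k. 2^k \<le> n" and b=n, OF h[unfolded level_def] bd2])
    then show False by simp
  qed
qed
lemma pos_lt: "n \<ge> 1 \<Longrightarrow> pos n < 2 ^ level n"
  using level_bounds[of n] by (simp add: pos_def)

lemma level_pow: "level (2 ^ k) = k" by (rule level_char) auto
lemma pos_pow: "pos (2 ^ k) = 0" by (simp add: pos_def level_pow)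

lemma nu_dvd: "n \<ge> 1 \<Longrightarrow> 2 ^ nu n dvd n"
proof -
  assume n: "n \<ge> 1"
  have b: "k \<le> n" if "2 ^ k dvd n" for k
  proof -
    have "2 ^ k \<le> n" using dvd_imp_le[OF that] n by simp
    then show ?thesis by (rule bd2)
  qed
  show ?thesis unfolding nu_def
    by (rule GreatestI_nat[where P="\<lambda>k. 2^k dvd n" and k=0 and b=n]) (simp, rule b)
qed
lemma nu_pow: "nu (2 ^ k) = k"
  unfolding nu_def
proof (rule Greatest_equality)
  show "2 ^ k dvd (2::nat) ^ k" by simp
  fix y assume "2 ^ y dvd (2::nat) ^ k"
  then show "y \<le> k" by (rule power_dvd_imp_le) simp
qed

lemma nu_le_level: "n \<ge> 1 \<Longrightarrow> nu n \<le> level n"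
proof -
  assume n: "n \<ge> 1"
  have "2 ^ nu n \<le> n" using nu_dvd[OF n] n by (simp add: dvd_imp_le)
  then have "2 ^ nu n < (2::nat) ^ Suc (level n)" using level_bounds(2)[OF n] by linarith
  then have "nu n < Suc (level n)" by (rule power_less_imp_less_exp[rotated]) simp
  then show ?thesis by simp
qed

lemma dil_eq: "dil u n t = (if 0 < 2 ^ level n * t - real (pos n) \<and> 2 ^ level n * t - real (pos n) \<le> 1
     then u (2 ^ level n * t - real (pos n)) else 0)"
proof -
  have p: "(0::real) < 2 ^ level n" by simp
  have "(real (pos n) / 2 ^ level n < t) = (0 < 2 ^ level n * t - real (pos n))"
    using p by (simp add: field_simps)
  moreover have "(t \<le> (real (pos n) + 1) / 2 ^ level n) = (2 ^ level n * t - real (pos n) \<le> 1)"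
    using p by (simp add: field_simps)
  ultimately show ?thesis unfolding dil_def by simp
qed

lemma dil_subst: "dil u n (real (pos n) / 2 ^ level n + s / 2 ^ level n) = (if 0 < s \<and> s \<le> 1 then u s else 0)"
proof -
  have "2 ^ level n * (real (pos n) / 2 ^ level n + s / 2 ^ level n) - real (pos n) = s"
    by (simp add: field_simps)
  then show ?thesis by (simp add: dil_eq)
qed

lemma dil_supp: "n \<ge> 1 \<Longrightarrow> dil u n t \<noteq> 0 \<Longrightarrow> 0 < t \<and> t \<le> 1"
proof -
  assume n: "n \<ge> 1" and ne: "dil u n t \<noteq> 0"
  then have A: "real (pos n) / 2 ^ level n < t" and B: "t \<le> (real (pos n) + 1) / 2 ^ level n"
    unfolding dil_def by (auto split: if_splits)
  have "pos n + 1 \<le> 2 ^ level n" using pos_lt[OF n] by simp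
  then have "real (pos n + 1) \<le> real ((2::nat) ^ level n)" by (simp only: of_nat_le_iff)
  then have "real (pos n) + 1 \<le> 2 ^ level n" by simp
  then have "(real (pos n) + 1) / 2 ^ level n \<le> 1" by simp
  moreover have "0 \<le> real (pos n) / 2 ^ level n" by simp
  ultimately show ?thesis using A B by linarith
qed

lemma haar_out: "\<not> (0 < x \<and> x \<le> 1) \<Longrightarrow> haar x = 0"
  unfolding haar_def by auto

lemma haar_fn_eq: "haar_fn n t = haar (2 ^ level n * t - real (pos n))"
  unfolding haar_fn_def dil_eq using haar_out by auto

lemma div_level:
  assumes n: "n \<ge> 1" and j: "j \<le> nu n"
  shows "level (n div 2 ^ j) = level n - j"
    and "real (pos (n div 2 ^ j)) = real (pos n) / 2 ^ j"
proof -
  define m where "m = level n"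
  define x where "x = n div 2 ^ j"
  have jm: "j \<le> m" using nu_le_level[OF n] j by (simp add: m_def)
  have dv: "2 ^ j dvd n" using nu_dvd[OF n] j by (meson dvd_trans le_imp_power_dvd)
  have nx: "n = 2 ^ j * x" using dv by (simp add: x_def)
  have mm: "(2::nat) ^ m = 2 ^ j * 2 ^ (m - j)" using jm by (metis le_add_diff_inverse power_add)
  have mm1: "(2::nat) ^ Suc m = 2 ^ j * 2 ^ Suc (m - j)" using mm by simp
  have l1: "2 ^ (m - j) \<le> x" using level_bounds(1)[OF n, folded m_def] nx mm
    by (metis mult_le_cancel1 zero_less_numeral zero_less_power nat_mult_le_cancel_disj)
  have l2: "x < 2 ^ Suc (m - j)" using level_bounds(2)[OF n, folded m_def] nx mm1
    by (metis nat_mult_less_cancel_disj)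
  have lx: "level x = m - j" by (rule level_char[OF l1 l2])
  then show "level (n div 2 ^ j) = level n - j" by (simp add: x_def m_def)
  have "real (pos x) = real x - 2 ^ (m - j)" unfolding pos_def lx using l1 by (simp add: of_nat_diff)
  also have "\<dots> = (real n - 2 ^ m) / 2 ^ j"
  proof -
    have "real n = 2 ^ j * real x" using nx by simp
    moreover have "(2::real) ^ m = 2 ^ j * 2 ^ (m - j)" using jm by (metis le_add_diff_inverse power_add)
    ultimately show ?thesis by (simp add: field_simps)
  qed
  also have "\<dots> = real (pos n) / 2 ^ j"
    using level_bounds(1)[OF n] by (simp add: pos_def m_def of_nat_diff)
  finally show "real (pos (n div 2 ^ j)) = real (pos n) / 2 ^ j" by (simp add: x_def)
qed

lemma haar_div_subst:
  assumes n: "n \<ge> 1" and j: "j \<le> nu n"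
  shows "haar_fn (n div 2 ^ j) (real (pos n) / 2 ^ level n + s / 2 ^ level n) = haar (s / 2 ^ j)"
proof -
  define m where "m = level n"
  have jm: "j \<le> m" using nu_le_level[OF n] j by (simp add: m_def)
  have e: "(2::real) ^ (m - j) = 2 ^ m / 2 ^ j" using jm by (simp add: power_diff)
  have "2 ^ (m - j) * (real (pos n) / 2 ^ m + s / 2 ^ m) - real (pos n) / 2 ^ j = s / 2 ^ j"
    unfolding e by (simp add: field_simps)
  then show ?thesis unfolding haar_fn_eq div_level[OF n j] m_def by simp
qed

definition Gf :: "(nat \<Rightarrow> complex) \<Rightarrow> nat \<Rightarrow> real \<Rightarrow> complex" where
  "Gf d N s = (\<Sum>j=0..N. aa d j * haar (s / 2 ^ j))"

lemma haar_val: "haar (s / 2 ^ j) = (if 0 < s \<and> s \<le> 2 ^ j / 2 then 1 else if 2 ^ j / 2 < s \<and> s \<le> 2 ^ j then -1 else 0)"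
proof -
  have p: "(0::real) < 2 ^ j" by simp
  have e1: "(0 < s / 2 ^ j) = (0 < s)" using p by (simp add: divide_simps)
  have e2: "(s / 2 ^ j \<le> 1/2) = (s \<le> 2 ^ j / 2)" using p by (simp add: divide_simps)
  have e3: "(1/2 < s / 2 ^ j) = (2 ^ j / 2 < s)" using p by (simp add: divide_simps)
  have e4: "(s / 2 ^ j \<le> 1) = (s \<le> 2 ^ j)" using p by (simp add: divide_simps)
  show ?thesis unfolding haar_def e1 e2 e3 e4 by simp
qed

lemma p2_ge1: "(1::real) \<le> 2 ^ j" by simp
lemma p2_mono: "j \<le> k \<Longrightarrow> (2::real) ^ j \<le> 2 ^ k" by (rule power_increasing) auto
lemma p2_lt: "j < k \<Longrightarrow> (2::real) ^ j \<le> 2 ^ k / 2"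
proof -
  assume "j < k"
  then have "(2::real) ^ Suc j \<le> 2 ^ k" by (intro p2_mono) simp
  then show ?thesis by simp
qed

lemma cover: "0 < s \<Longrightarrow> s \<le> 2 ^ N \<Longrightarrow> s \<le> 1/2 \<or> (\<exists>k\<le>N. 2 ^ k / 2 < s \<and> s \<le> (2::real) ^ k)"
proof (induction N)
  case 0 then show ?case by (cases "s \<le> 1/2") auto
next
  case (Suc N)
  show ?case
  proof (cases "s \<le> 2 ^ N")
    case True
    then show ?thesis using Suc by (meson le_Suc_eq)
  next
    case False
    then show ?thesis using Suc.prems by (intro disjI2 exI[of _ "Suc N"]) auto
  qed
qed

lemma Gf_pointwise:
  "norm (Gf d N s) powr q = indicator {0<..1/2} s * norm (TT d N 0) powr q
     + (\<Sum>k\<le>N. indicator {2 ^ k / 2<..2 ^ k} s * norm (TT d N (Suc k) - aa d k) powr q)"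
proof -
  consider (A) "\<not> (0 < s \<and> s \<le> 2 ^ N)" | (B) "0 < s" "s \<le> 1/2"
    | (C) k where "k \<le> N" "2 ^ k / 2 < s" "s \<le> 2 ^ k"
    using cover[of s N] by (cases "0 < s \<and> s \<le> 2 ^ N") auto
  then show ?thesis
  proof cases
    case A
    have h: "haar (s / 2 ^ j) = 0" if "j \<le> N" for j
    proof -
      have pj: "(2::real)^j \<le> 2^N" by (rule p2_mono[OF that])
      have "s \<le> 0 \<or> 2 ^ j < s"
      proof (cases "0 < s")
        case True
        with A have "2 ^ N < s" by auto
        with pj show ?thesis by linarith
      next
        case False then show ?thesis by linarith
      qed
      moreover have "(0::real) < 2 ^ j / 2" by simp
      ultimately show ?thesis unfolding haar_val by auto
    qed
    have "Gf d N s = 0" unfolding Gf_def by (rule sum.neutral) (auto simp: h)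
    moreover have "indicator {0<..1/2} s = (0::real)"
    proof (cases "0 < s")
      case True
      with A have "2 ^ N < s" by auto
      with p2_ge1[of N] have "\<not> s \<le> 1/2" by linarith
      then show ?thesis by (simp add: indicator_def)
    next
      case False then show ?thesis by (simp add: indicator_def)
    qed
    moreover have "indicator {2 ^ k / 2<..2 ^ k} s = (0::real)" if "k \<le> N" for k
    proof (cases "0 < s")
      case True
      with A have "2 ^ N < s" by auto
      with p2_mono[OF that] have "\<not> s \<le> 2 ^ k" by linarith
      then show ?thesis by (simp add: indicator_def)
    next
      case False
      have "(0::real) < 2 ^ k / 2" by simp
      with False have "\<not> 2 ^ k / 2 < s" by linarith
      then show ?thesis by (simp add: indicator_def)
    qed
    ultimately show ?thesis by simp
  next
    case B
    have h: "haar (s / 2 ^ j) = 1" for j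
    proof -
      have "s \<le> 2 ^ j / 2" using B p2_ge1[of j] by linarith
      then show ?thesis using B unfolding haar_val by simp
    qed
    have "Gf d N s = TT d N 0" unfolding Gf_def TT_def by (simp add: h)
    moreover have "indicator {0<..1/2} s = (1::real)" using B by (auto simp: indicator_def)
    moreover have "indicator {2 ^ k / 2<..2 ^ k} s = (0::real)" for k
    proof -
      have "\<not> 2 ^ k / 2 < s" using B p2_ge1[of k] by linarith
      then show ?thesis by (simp add: indicator_def)
    qed
    ultimately show ?thesis by simp
  next
    case C
    have s0: "0 < s" using C p2_ge1[of k] by linarith
    have h: "haar (s / 2 ^ j) = (if k < j then 1 else if j = k then -1 else 0)" for j
    proof (cases "j < k")
      case True
      then show ?thesis using C p2_lt[OF True] unfolding haar_val by auto
    next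
      case False
      show ?thesis
      proof (cases "j = k")
        case True then show ?thesis using C s0 unfolding haar_val by auto
      next
        case F2: False
        with False have "k < j" by simp
        then show ?thesis using C s0 p2_lt[of k j] unfolding haar_val by auto
      qed
    qed
    have "Gf d N s = (\<Sum>j=0..N. (if k < j then aa d j else 0) - (if j = k then aa d j else 0))"
      unfolding Gf_def by (rule sum.cong) (auto simp: h)
    also have "\<dots> = (\<Sum>j=0..N. if k < j then aa d j else 0) - aa d k"
      using C by (simp add: sum_subtractf)
    also have "(\<Sum>j=0..N. if k < j then aa d j else 0) = TT d N (Suc k)"
    proof -
      have e: "{j. j \<le> N \<and> k < j} = {Suc k..N}" by auto
      show ?thesis unfolding TT_def
        by (subst sum.inter_filter[symmetric]) (simp_all add: e atLeast0AtMost)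
    qed
    finally have G: "Gf d N s = TT d N (Suc k) - aa d k" .
    have I0: "indicator {0<..1/2} s = (0::real)"
    proof -
      have "\<not> s \<le> 1/2" using C p2_ge1[of k] by linarith
      then show ?thesis by (simp add: indicator_def)
    qed
    have Ik: "indicator {2 ^ k' / 2<..2 ^ k'} s = (if k' = k then 1 else (0::real))" for k'
    proof (cases "k' = k")
      case True then show ?thesis using C by (auto simp: indicator_def)
    next
      case False
      then consider "k' < k" | "k < k'" by linarith
      then show ?thesis
      proof cases
        case 1 then show ?thesis using C p2_lt[OF 1] False by (auto simp: indicator_def)
      next
        case 2 then show ?thesis using C p2_lt[OF 2] False by (auto simp: indicator_def)
      qed
    qed
    have S: "(\<Sum>k'\<le>N. indicator {2 ^ k' / 2<..2 ^ k'} s * norm (TT d N (Suc k') - aa d k') powr q)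
       = norm (TT d N (Suc k) - aa d k) powr q"
    proof -
      have "(\<Sum>k'\<le>N. indicator {2 ^ k' / 2<..2 ^ k'} s * norm (TT d N (Suc k') - aa d k') powr q)
         = (\<Sum>k'\<le>N. if k' = k then norm (TT d N (Suc k') - aa d k') powr q else 0)"
        by (rule sum.cong) (auto simp: Ik)
      also have "\<dots> = norm (TT d N (Suc k) - aa d k) powr q" using C(1) by simp
      finally show ?thesis .
    qed
    show ?thesis by (simp add: G I0 S)
  qed
qed

lemma integrable_ind_const: "a \<le> b \<Longrightarrow> integrable lborel (\<lambda>s::real. indicator {a<..b} s * (c::real))"
  by (intro integrable_mult_left) (simp add: integrable_indicator_iff)

lemma Gf_integral: "(\<integral>s. norm (Gf d N s) powr q \<partial>lborel) = Psi q d N"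
proof -
  define X where "X k = norm (TT d N (Suc k) - aa d k) powr q" for k
  define Y where "Y = norm (TT d N 0) powr q"
  have i1: "integrable lborel (\<lambda>s::real. indicator {0<..1/2} s * Y)" by (rule integrable_ind_const) simp
  have i2: "integrable lborel (\<lambda>s::real. indicator {2^k/2<..2^k} s * X k)" for k
    by (rule integrable_ind_const) simp
  have i3: "integrable lborel (\<lambda>s::real. \<Sum>k\<le>N. indicator {2^k/2<..2^k} s * X k)"
    by (rule Bochner_Integration.integrable_sum) (rule i2)
  have "(\<integral>s. norm (Gf d N s) powr q \<partial>lborel) =
    (\<integral>s. indicator {0<..1/2} (s::real) * Y + (\<Sum>k\<le>N. indicator {2 ^ k / 2<..2 ^ k} s * X k) \<partial>lborel)"
    unfolding X_def Y_def by (simp only: Gf_pointwise)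
  also have "\<dots> = (\<integral>s. indicator {0<..1/2} (s::real) * Y \<partial>lborel)
     + (\<integral>s. (\<Sum>k\<le>N. indicator {2 ^ k / 2<..2 ^ k} (s::real) * X k) \<partial>lborel)"
    by (rule Bochner_Integration.integral_add[OF i1 i3])
  also have "(\<integral>s. (\<Sum>k\<le>N. indicator {2 ^ k / 2<..2 ^ k} (s::real) * X k) \<partial>lborel)
     = (\<Sum>k\<le>N. (\<integral>s. indicator {2 ^ k / 2<..2 ^ k} (s::real) * X k \<partial>lborel))"
    by (rule Bochner_Integration.integral_sum) (rule i2)
  also have "(\<integral>s. indicator {0<..1/2} (s::real) * Y \<partial>lborel) = Y / 2" by simp
  also have "(\<Sum>k\<le>N. (\<integral>s. indicator {2 ^ k / 2<..2 ^ k} (s::real) * X k \<partial>lborel)) = (\<Sum>k\<le>N. 2 ^ k / 2 * X k)"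
    by (rule sum.cong) simp_all
  finally show ?thesis unfolding Psi_def X_def Y_def by simp
qed

lemma set_int_full:
  assumes "\<And>t. \<not> (0 < t \<and> t \<le> 1) \<Longrightarrow> u t = 0"
  shows "set_lebesgue_integral lborel {0<..1::real} (\<lambda>t. norm (u t) powr q) = (\<integral>t. norm (u t) powr q \<partial>lborel)"
  unfolding set_lebesgue_integral_def
proof (rule Bochner_Integration.integral_cong)
  fix t :: real
  show "indicator {0<..1} t *\<^sub>R norm (u t) powr q = norm (u t) powr q"
  proof (cases "0 < t \<and> t \<le> 1")
    case True then show ?thesis by (simp add: indicator_def)
  next
    case False then have "u t = 0" by (rule assms)
    then show ?thesis by simp
  qed
qed simp

lemma affine2:
  fixes F :: "real \<Rightarrow> real"
  shows "(\<integral>t. F t \<partial>lborel) = (1 / 2 ^ m) * (\<integral>s. F (p / 2 ^ m + s / 2 ^ m) \<partial>lborel)"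
  using lborel_integral_real_affine[of "1/2^m" F "p/2^m"] by simp

lemma Lp_dil:
  assumes n: "n \<ge> 1"
  shows "Lpnorm P (dil f n) = (1 / 2 ^ level n * set_lebesgue_integral lborel {0<..1::real} (\<lambda>t. norm (f t) powr P)) powr (1/P)"
proof -
  have "set_lebesgue_integral lborel {0<..1::real} (\<lambda>t. norm (dil f n t) powr P) = (\<integral>t. norm (dil f n t) powr P \<partial>lborel)"
    by (rule set_int_full) (use dil_supp[OF n] in blast)
  also have "\<dots> = (1 / 2 ^ level n) * (\<integral>s. norm (dil f n (real (pos n) / 2 ^ level n + s / 2 ^ level n)) powr P \<partial>lborel)"
    by (rule affine2)
  also have "(\<integral>s. norm (dil f n (real (pos n) / 2 ^ level n + s / 2 ^ level n)) powr P \<partial>lborel)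
      = set_lebesgue_integral lborel {0<..1::real} (\<lambda>t. norm (f t) powr P)"
    unfolding set_lebesgue_integral_def dil_subst
    by (rule Bochner_Integration.integral_cong) (auto simp: indicator_def)
  finally show ?thesis unfolding Lpnorm_def by simp
qed

lemma gdual_supp:
  assumes n: "n \<ge> 1" and t: "\<not> (0 < t \<and> t \<le> 1)"
  shows "gdual c n t = 0"
  unfolding gdual_def
proof (rule sum.neutral, rule ballI)
  fix j assume "j \<in> {0..nu n}"
  then have j: "j \<le> nu n" by simp
  have dv: "2 ^ j dvd n" using nu_dvd[OF n] j by (meson dvd_trans le_imp_power_dvd)
  then have "2 ^ j \<le> n" using n by (simp add: dvd_imp_le)
  then have "n div 2 ^ j \<ge> 1" by (simp add: div_greater_zero_iff Suc_le_eq)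
  then have "haar_fn (n div 2 ^ j) t = 0" using dil_supp[of "n div 2 ^ j" haar t] t unfolding haar_fn_def by blast
  then show "inv_coeffs c j * 2 ^ (level n - j) * haar_fn (n div 2 ^ j) t = 0" by simp
qed

lemma gdual_subst:
  assumes n: "n \<ge> 1"
  shows "gdual c n (real (pos n) / 2 ^ level n + s / 2 ^ level n) = 2 ^ level n * Gf (inv_coeffs c) (nu n) s"
  unfolding gdual_def Gf_def sum_distrib_left
proof (rule sum.cong)
  fix j assume "j \<in> {0..nu n}"
  then have j: "j \<le> nu n" by simp
  have jm: "j \<le> level n" using nu_le_level[OF n] j by simp
  have e: "(2::complex) ^ (level n - j) = 2 ^ level n / 2 ^ j" using jm by (simp add: power_diff)
  show "inv_coeffs c j * 2 ^ (level n - j) * haar_fn (n div 2 ^ j) (real (pos n) / 2 ^ level n + s / 2 ^ level n)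
     = 2 ^ level n * (aa (inv_coeffs c) j * haar (s / 2 ^ j))"
    unfolding haar_div_subst[OF n j] e aa_def by (simp add: field_simps)
qed simp

lemma Psi_nonneg: "Psi q d N \<ge> 0"
  unfolding Psi_def by (intro add_nonneg_nonneg mult_nonneg_nonneg sum_nonneg) auto

lemma Lp_g:
  assumes n: "n \<ge> 1"
  shows "Lpnorm q (gdual c n) = (1 / 2 ^ level n * ((2 ^ level n) powr q * Psi q (inv_coeffs c) (nu n))) powr (1/q)"
proof -
  have "set_lebesgue_integral lborel {0<..1::real} (\<lambda>t. norm (gdual c n t) powr q) = (\<integral>t. norm (gdual c n t) powr q \<partial>lborel)"
    by (rule set_int_full) (use gdual_supp[OF n] in blast)
  also have "\<dots> = (1 / 2 ^ level n) * (\<integral>s. norm (gdual c n (real (pos n) / 2 ^ level n + s / 2 ^ level n)) powr q \<partial>lborel)"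
    by (rule affine2)
  also have "(\<integral>s. norm (gdual c n (real (pos n) / 2 ^ level n + s / 2 ^ level n)) powr q \<partial>lborel)
      = (\<integral>s. (2 ^ level n) powr q * norm (Gf (inv_coeffs c) (nu n) s) powr q \<partial>lborel)"
  proof (rule Bochner_Integration.integral_cong)
    fix s
    have "norm (gdual c n (real (pos n) / 2 ^ level n + s / 2 ^ level n)) = 2 ^ level n * norm (Gf (inv_coeffs c) (nu n) s)"
      unfolding gdual_subst[OF n] by (simp add: norm_mult norm_power)
    then show "norm (gdual c n (real (pos n) / 2 ^ level n + s / 2 ^ level n)) powr q = (2 ^ level n) powr q * norm (Gf (inv_coeffs c) (nu n) s) powr q"
      by (simp add: powr_mult)
  qed simp
  also have "\<dots> = (2 ^ level n) powr q * Psi q (inv_coeffs c) (nu n)"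
    by (simp add: Gf_integral)
  finally show ?thesis unfolding Lpnorm_def by simp
qed

lemma level_one: "level (Suc 0) = 0" using level_pow[of 0] by simp
lemma pos_one: "pos (Suc 0) = 0" using pos_pow[of 0] by simp

lemma chaos_half:
  assumes t: "1/2 < t" "t \<le> 1"
  shows "chaos c t = - c 0"
proof -
  have h: "c k * haar_fn (2 ^ k) t = (if k = 0 then - c 0 else 0)" for k
  proof (cases "k = 0")
    case True then show ?thesis using t by (simp add: haar_fn_eq level_one pos_one haar_def)
  next
    case False
    then have "(2::real) ^ 1 \<le> 2 ^ k" by (intro p2_mono) simp
    then have "(2::real) * t \<le> 2 ^ k * t" using t by (intro mult_right_mono) auto
    then have "1 < 2 ^ k * t" using t by linarith
    then show ?thesis using False by (simp add: haar_fn_eq level_pow pos_pow haar_def)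
  qed
  have "chaos c t = (\<Sum>k. if k = 0 then - c 0 else 0)" unfolding chaos_def h ..
  also have "\<dots> = - c 0"
    using sums_unique[OF sums_single[of 0 "\<lambda>_. - c 0"]] by simp
  finally show ?thesis .
qed

lemma K_pos:
  assumes c0: "c 0 \<noteq> 0" and P: "P > 0"
    and int: "set_integrable lborel {0<..1::real} (\<lambda>t. norm (chaos c t) powr P)"
  shows "set_lebesgue_integral lborel {0<..1::real} (\<lambda>t. norm (chaos c t) powr P) > 0"
proof -
  define C where "C = norm (c 0) powr P"
  have C0: "C > 0" using c0 by (simp add: C_def)
  have "C / 2 = (\<integral>t. indicator {1/2<..1} (t::real) * C \<partial>lborel)" by simp
  also have "\<dots> \<le> (\<integral>t. indicator {0<..1} t *\<^sub>R norm (chaos c t) powr P \<partial>lborel)"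
  proof (rule integral_mono)
    show "integrable lborel (\<lambda>t. indicator {1/2<..1} (t::real) * C)" by (rule integrable_ind_const) simp
    show "integrable lborel (\<lambda>t. indicator {0<..1} (t::real) *\<^sub>R norm (chaos c t) powr P)"
      using int by (simp add: set_integrable_def)
    fix t :: real
    show "indicator {1/2<..1} t * C \<le> indicator {0<..1} t *\<^sub>R norm (chaos c t) powr P"
    proof (cases "1/2 < t \<and> t \<le> 1")
      case True then show ?thesis by (simp add: indicator_def chaos_half C_def)
    next
      case False then show ?thesis by (simp add: indicator_def)
    qed
  qed
  finally show ?thesis unfolding set_lebesgue_integral_def using C0 by simp
qed

lemma product_eq:
  assumes n: "n \<ge> 1" and pq: "1 / p + 1 / p' = 1" and p: "p > 0" and p': "p' > 0"
  shows "Lpnorm p (dil (chaos c) n) * Lpnorm p' (gdual c n) =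
    set_lebesgue_integral lborel {0<..1::real} (\<lambda>t. norm (chaos c t) powr p) powr (1/p)
    * Psi p' (inv_coeffs c) (nu n) powr (1/p')"
proof -
  define K where "K = set_lebesgue_integral lborel {0<..1::real} (\<lambda>t. norm (chaos c t) powr p)"
  define Y where "Y = Psi p' (inv_coeffs c) (nu n)"
  define a :: real where "a = 1 / 2 ^ level n"
  define b :: real where "b = 2 ^ level n"
  have K0: "K \<ge> 0" unfolding K_def set_lebesgue_integral_def
    by (rule Bochner_Integration.integral_nonneg) (simp add: indicator_def)
  have Y0: "Y \<ge> 0" unfolding Y_def by (rule Psi_nonneg)
  have a0: "a > 0" and b0: "b > 0" by (simp_all add: a_def b_def)
  have ab: "a * b = 1" by (simp add: a_def b_def)
  have "Lpnorm p (dil (chaos c) n) * Lpnorm p' (gdual c n) = (a * K) powr (1/p) * (a * (b powr p' * Y)) powr (1/p')"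
    unfolding Lp_dil[OF n] Lp_g[OF n] a_def b_def K_def Y_def by simp
  also have "\<dots> = (a powr (1/p) * a powr (1/p')) * (b powr p') powr (1/p') * K powr (1/p) * Y powr (1/p')"
    using a0 b0 K0 Y0 by (simp add: powr_mult)
  also have "a powr (1/p) * a powr (1/p') = a" using a0 pq by (simp add: powr_add[symmetric])
  also have "(b powr p') powr (1/p') = b" using b0 p' by (simp add: powr_powr)
  finally show ?thesis using ab by (simp add: K_def Y_def mult.assoc[symmetric])
qed

theorem lemma4:
  fixes p p' :: real and c :: "nat \<Rightarrow> complex"
  assumes "1 < p" and "1 / p + 1 / p' = 1"
    and "c 0 \<noteq> 0"
    and "set_integrable lborel {0<..1::real} (\<lambda>t. norm (chaos c t) powr p)"
  shows "A_plus p' (2 powr (- 1 / p)) (inv_coeffs c) \<longleftrightarrow>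
         (\<exists>C. \<forall>n\<ge>1. Lpnorm p (dil (chaos c) n) * Lpnorm p' (gdual c n) \<le> C)"
proof -
  have ip': "1 / p' = 1 - 1 / p" using assms(2) by simp
  have "0 < 1 / p" "1 / p < 1" using assms(1) by auto
  then have h1: "0 < 1 / p'" and h2: "1 / p' < 1" using ip' by auto
  have p'0: "p' > 0" using h1 by (simp add: zero_less_divide_1_iff)
  have p'1: "p' > 1" using h2 p'0 by (simp add: divide_less_eq)
  have p0: "p > 0" using assms(1) by simp
  have qP: "1 / p + 1 / p' = 1" by (rule assms(2))
  define K where "K = set_lebesgue_integral lborel {0<..1::real} (\<lambda>t. norm (chaos c t) powr p)"
  have Kpos: "K > 0" unfolding K_def by (rule K_pos[OF assms(3) p0 assms(4)])
  define Kp where "Kp = K powr (1/p)"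
  have Kp0: "Kp > 0" using Kpos by (simp add: Kp_def)
  define d where "d = inv_coeffs c"
  have prod: "Lpnorm p (dil (chaos c) n) * Lpnorm p' (gdual c n) = Kp * Psi p' d (nu n) powr (1/p')" if "n \<ge> 1" for n
    using product_eq[OF that qP p0 p'0] by (simp add: Kp_def K_def d_def)
  have disc: "A_plus p' (2 powr (- 1 / p)) d \<longleftrightarrow> (\<exists>C. \<forall>N. Psi p' d N \<le> C)"
    unfolding A_plus_def by (rule discrete[OF p'1]) (use qP in simp)
  have "(\<exists>C. \<forall>N. Psi p' d N \<le> C) \<longleftrightarrow> (\<exists>C. \<forall>n\<ge>1. Kp * Psi p' d (nu n) powr (1/p') \<le> C)"
  proof
    assume "\<exists>C. \<forall>N. Psi p' d N \<le> C"
    then obtain C where C: "\<And>N. Psi p' d N \<le> C" by blast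
    have "Kp * Psi p' d (nu n) powr (1/p') \<le> Kp * C powr (1/p')" for n
      using C[of "nu n"] Kp0 p'0 Psi_nonneg[of p' d "nu n"]
      by (intro mult_left_mono powr_mono2) auto
    then show "\<exists>C. \<forall>n\<ge>1. Kp * Psi p' d (nu n) powr (1/p') \<le> C" by blast
  next
    assume "\<exists>C. \<forall>n\<ge>1. Kp * Psi p' d (nu n) powr (1/p') \<le> C"
    then obtain C where C: "\<And>n. n \<ge> 1 \<Longrightarrow> Kp * Psi p' d (nu n) powr (1/p') \<le> C" by blast
    have "Psi p' d N \<le> (C / Kp) powr p'" for N
    proof -
      have "Kp * Psi p' d N powr (1/p') \<le> C" using C[of "2 ^ N"] by (simp add: nu_pow)
      then have h: "Psi p' d N powr (1/p') \<le> C / Kp" using Kp0 by (simp add: field_simps mult.commute)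
      have "Psi p' d N = (Psi p' d N powr (1/p')) powr p'"
        using p'0 Psi_nonneg[of p' d N] by (simp add: powr_powr)
      also have "\<dots> \<le> (C / Kp) powr p'"
        using h p'0 by (intro powr_mono2) auto
      finally show ?thesis .
    qed
    then show "\<exists>C. \<forall>N. Psi p' d N \<le> C" by blast
  qed
  also have "\<dots> \<longleftrightarrow> (\<exists>C. \<forall>n\<ge>1. Lpnorm p (dil (chaos c) n) * Lpnorm p' (gdual c n) \<le> C)"
    using prod by auto
  finally show ?thesis using disc by (simp add: d_def)
qed

end
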